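(* Let $\gamma$ be an $\mathbb{F}$-functorial and let $\mathfrak{F}(\gamma)$ be the class of all finite groups $G$ with $\gamma(G)=G$. Then $\mathfrak{F}(\gamma)=\mathfrak{F}(\gamma^\infty)$, $\mathfrak{F}(\gamma)$ is closed under homomorphic images and $N_0$-closed, and $G_{\mathfrak{F}(\gamma)}=\gamma^\infty(G)$ for every group $G$.
   Context: All groups are finite. A functorial is a function $\theta$ assigning to each group $G$ a characteristic subgroup $\theta(G)$ such that $f(\theta(G))=\theta(f(G))$ for every isomorphism $f:G\to G^*$. An $\mathbb{F}$-functorial is a functorial $\gamma$ satisfying, for every group $G$: (F1) $f(\gamma(G))\subseteq\gamma(f(G))$ for every epimorphism $f:G\to G^*$; (F2) $\gamma(N)\subseteq\gamma(G)$ for every $N\trianglelefteq G$; (F3) $C_G(\gamma(G))\subseteq\gamma(G)$; (F4) $\gamma(G)/\Phi(G)\subseteq\mathrm{Soc}(G/\Phi(G))$. $\gamma^{(1)}=\gamma$, $\gamma^{(i+1)}(G)=\gamma(\gamma^{(i)}(G))$, $\gamma^\infty(G)=\bigcap_i\gamma^{(i)}(G)$. A class $\mathfrak{X}$ is $N_0$-closed if $G=NM$ with $N,M$ normal $\mathfrak{X}$-subgroups of $G$ implies $G\in\mathfrak{X}$. For an $N_0$-closed class $\mathfrak{X}$ containing $1$, $G_\mathfrak{X}=\langle H\trianglelefteq G\mid H\in\mathfrak{X}\rangle$ is the largest normal $\mathfrak{X}$-subgroup of $G$. *)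

theory Defs
  imports "HOL-Algebra.Algebra"
begin

text \<open>Convention: "all finite groups" are represented by finite groups whose carrier is a
subset of the natural numbers (every finite group is isomorphic to such a group).\<close>

type_synonym grp = "nat monoid"

definition finite_group :: "('a, 'b) monoid_scheme \<Rightarrow> bool" where
  "finite_group G \<longleftrightarrow> group G \<and> finite (carrier G)"

definition char_subgroup :: "'a set \<Rightarrow> ('a, 'b) monoid_scheme \<Rightarrow> bool" where
  "char_subgroup H G \<longleftrightarrow> subgroup H G \<and> (\<forall>f \<in> iso G G. f ` H = H)"

definition centralizer :: "('a, 'b) monoid_scheme \<Rightarrow> 'a set \<Rightarrow> 'a set" where
  "centralizer G S = {g \<in> carrier G. \<forall>h \<in> S. g \<otimes>\<^bsub>G\<^esub> h = h \<otimes>\<^bsub>G\<^esub> g}"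

definition maximal_subgroup :: "'a set \<Rightarrow> ('a, 'b) monoid_scheme \<Rightarrow> bool" where
  "maximal_subgroup H G \<longleftrightarrow> subgroup H G \<and> H \<noteq> carrier G \<and>
     (\<forall>K. subgroup K G \<and> H \<subseteq> K \<longrightarrow> K = H \<or> K = carrier G)"

definition frattini :: "('a, 'b) monoid_scheme \<Rightarrow> 'a set" where
  "frattini G = carrier G \<inter> \<Inter> {H. maximal_subgroup H G}"

definition minimal_normal :: "'a set \<Rightarrow> ('a, 'b) monoid_scheme \<Rightarrow> bool" where
  "minimal_normal N G \<longleftrightarrow> N \<lhd> G \<and> N \<noteq> {\<one>\<^bsub>G\<^esub>} \<and>
     (\<forall>M. M \<lhd> G \<and> M \<subseteq> N \<longrightarrow> M = {\<one>\<^bsub>G\<^esub>} \<or> M = N)"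

definition socle :: "('a, 'b) monoid_scheme \<Rightarrow> 'a set" where
  "socle G = generate G (\<Union> {N. minimal_normal N G})"

definition functorial :: "(grp \<Rightarrow> nat set) \<Rightarrow> bool" where
  "functorial \<theta> \<longleftrightarrow>
     (\<forall>G. finite_group G \<longrightarrow> char_subgroup (\<theta> G) G) \<and>
     (\<forall>G H f. finite_group G \<and> finite_group H \<and> f \<in> iso G H \<longrightarrow> f ` \<theta> G = \<theta> H)"

definition F_functorial :: "(grp \<Rightarrow> nat set) \<Rightarrow> bool" where
  "F_functorial \<gamma> \<longleftrightarrow> functorial \<gamma> \<and>
     (\<forall>G H f. finite_group G \<and> finite_group H \<and> f \<in> hom G H \<and> f ` carrier G = carrier H \<longrightarrow> f ` \<gamma> G \<subseteq> \<gamma> H) \<and>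
     (\<forall>G N. finite_group G \<and> N \<lhd> G \<longrightarrow> \<gamma> (G\<lparr>carrier := N\<rparr>) \<subseteq> \<gamma> G) \<and>
     (\<forall>G. finite_group G \<longrightarrow> centralizer G (\<gamma> G) \<subseteq> \<gamma> G) \<and>
     (\<forall>G. finite_group G \<longrightarrow>
        r_coset G (frattini G) ` \<gamma> G \<subseteq> socle (FactGroup G (frattini G)))"

primrec giter :: "(grp \<Rightarrow> nat set) \<Rightarrow> nat \<Rightarrow> grp \<Rightarrow> nat set" where
  "giter \<gamma> 0 G = carrier G"
| "giter \<gamma> (Suc i) G = \<gamma> (G\<lparr>carrier := giter \<gamma> i G\<rparr>)"

definition gamma_inf :: "(grp \<Rightarrow> nat set) \<Rightarrow> grp \<Rightarrow> nat set" where
  "gamma_inf \<gamma> G = (\<Inter>i \<in> {1..}. giter \<gamma> i G)"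

definition FF :: "(grp \<Rightarrow> nat set) \<Rightarrow> grp \<Rightarrow> bool" where
  "FF \<theta> G \<longleftrightarrow> finite_group G \<and> \<theta> G = carrier G"

definition hom_image_closed :: "(grp \<Rightarrow> bool) \<Rightarrow> bool" where
  "hom_image_closed P \<longleftrightarrow>
     (\<forall>G H f. P G \<and> finite_group H \<and> f \<in> hom G H \<and> f ` carrier G = carrier H \<longrightarrow> P H)"

definition N0_closed :: "(grp \<Rightarrow> bool) \<Rightarrow> bool" where
  "N0_closed P \<longleftrightarrow>
     (\<forall>G N M. finite_group G \<and> N \<lhd> G \<and> M \<lhd> G \<and>
        P (G\<lparr>carrier := N\<rparr>) \<and> P (G\<lparr>carrier := M\<rparr>) \<and> N <#>\<^bsub>G\<^esub> M = carrier G \<longrightarrow> P G)"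

definition X_radical :: "(grp \<Rightarrow> bool) \<Rightarrow> grp \<Rightarrow> nat set" where
  "X_radical P G = generate G (\<Union> {H. H \<lhd> G \<and> P (G\<lparr>carrier := H\<rparr>)})"

end

theory Submission
  imports Defs
begin

lemma sub_of_sub:
  assumes "group G" "subgroup I G" "subgroup J (G\<lparr>carrier := I\<rparr>)"
  shows "subgroup J G"
proof -
  have g: "group (G\<lparr>carrier := I\<rparr>)" using assms group.subgroup_imp_group by blast
  have "group ((G\<lparr>carrier := I\<rparr>)\<lparr>carrier := J\<rparr>)"
    using group.subgroup_imp_group[OF g assms(3)] .
  hence "group (G\<lparr>carrier := J\<rparr>)" by simp
  moreover have "J \<subseteq> carrier G" using subgroup.subset[OF assms(3)] subgroup.subset[OF assms(2)] by simp
  ultimately show ?thesis using group.group_incl_imp_subgroup[OF assms(1)] by blast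
qed

lemma fg_sub:
  assumes "finite_group G" "subgroup N G"
  shows "finite_group (G\<lparr>carrier := N\<rparr>)"
  using assms unfolding finite_group_def
  by (simp add: group.subgroup_imp_group) (meson finite_subset subgroup.subset)

lemma gamma_sub:
  assumes "F_functorial \<gamma>" "finite_group G"
  shows "subgroup (\<gamma> G) G"
proof -
  have "functorial \<gamma>" using assms(1) unfolding F_functorial_def by (elim conjE)
  hence "\<forall>G. finite_group G \<longrightarrow> char_subgroup (\<gamma> G) G" unfolding functorial_def by (elim conjE)
  hence "char_subgroup (\<gamma> G) G" using assms(2) by simp
  thus ?thesis unfolding char_subgroup_def by (elim conjE)
qed

lemma conj_iso:
  fixes G (structure)
  assumes "group G" "N \<lhd> G" "g \<in> carrier G"
  shows "(\<lambda>x. g \<otimes>\<^bsub>G\<^esub> x \<otimes>\<^bsub>G\<^esub> inv\<^bsub>G\<^esub> g) \<in> iso (G\<lparr>carrier := N\<rparr>) (G\<lparr>carrier := N\<rparr>)"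
proof -
  interpret group G by fact
  have sN: "subgroup N G" using assms normal_imp_subgroup by blast
  have NG: "N \<subseteq> carrier G" using sN subgroup.subset by blast
  have cl: "\<And>x h. x \<in> carrier G \<Longrightarrow> h \<in> N \<Longrightarrow> x \<otimes> h \<otimes> inv x \<in> N"
    using assms(2) normal_inv_iff by blast
  show ?thesis
    unfolding iso_def
  proof (intro CollectI conjI)
    show "(\<lambda>x. g \<otimes> x \<otimes> inv g) \<in> hom (G\<lparr>carrier := N\<rparr>) (G\<lparr>carrier := N\<rparr>)"
      unfolding hom_def
    proof (intro CollectI conjI ballI)
      show "(\<lambda>x. g \<otimes> x \<otimes> inv g) \<in> carrier (G\<lparr>carrier := N\<rparr>) \<rightarrow> carrier (G\<lparr>carrier := N\<rparr>)"
        using cl assms(3) by auto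
      fix x y assume "x \<in> carrier (G\<lparr>carrier := N\<rparr>)" "y \<in> carrier (G\<lparr>carrier := N\<rparr>)"
      hence x: "x \<in> carrier G" and y: "y \<in> carrier G" using NG by auto
      show "g \<otimes> (x \<otimes>\<^bsub>G\<lparr>carrier := N\<rparr>\<^esub> y) \<otimes> inv g =
            (g \<otimes> x \<otimes> inv g) \<otimes>\<^bsub>G\<lparr>carrier := N\<rparr>\<^esub> (g \<otimes> y \<otimes> inv g)"
        using x y assms(3) by (simp add: m_assoc) (simp add: m_assoc[symmetric])
    qed
    show "bij_betw (\<lambda>x. g \<otimes> x \<otimes> inv g) (carrier (G\<lparr>carrier := N\<rparr>)) (carrier (G\<lparr>carrier := N\<rparr>))"
      unfolding bij_betw_def
    proof (intro conjI)
      show "inj_on (\<lambda>x. g \<otimes> x \<otimes> inv g) (carrier (G\<lparr>carrier := N\<rparr>))"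
      proof (rule inj_onI)
        fix x y assume "x \<in> carrier (G\<lparr>carrier := N\<rparr>)" "y \<in> carrier (G\<lparr>carrier := N\<rparr>)"
          and e: "g \<otimes> x \<otimes> inv g = g \<otimes> y \<otimes> inv g"
        hence x: "x \<in> carrier G" and y: "y \<in> carrier G" using NG by auto
        have "g \<otimes> x = g \<otimes> y" using e x y assms(3) r_cancel by (meson inv_closed m_closed)
        thus "x = y" using x y assms(3) l_cancel by blast
      qed
      show "(\<lambda>x. g \<otimes> x \<otimes> inv g) ` carrier (G\<lparr>carrier := N\<rparr>) = carrier (G\<lparr>carrier := N\<rparr>)"
      proof
        show "(\<lambda>x. g \<otimes> x \<otimes> inv g) ` carrier (G\<lparr>carrier := N\<rparr>) \<subseteq> carrier (G\<lparr>carrier := N\<rparr>)"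
          using cl assms(3) by auto
        show "carrier (G\<lparr>carrier := N\<rparr>) \<subseteq> (\<lambda>x. g \<otimes> x \<otimes> inv g) ` carrier (G\<lparr>carrier := N\<rparr>)"
        proof
          fix y assume "y \<in> carrier (G\<lparr>carrier := N\<rparr>)"
          hence yN: "y \<in> N" by simp
          hence y: "y \<in> carrier G" using NG by auto
          have "inv g \<otimes> y \<otimes> inv (inv g) \<in> N" using cl[OF inv_closed[OF assms(3)] yN] by simp
          hence m: "inv g \<otimes> y \<otimes> g \<in> N" using assms(3) by simp
          have "g \<otimes> (inv g \<otimes> y \<otimes> g) \<otimes> inv g = y"
            using y assms(3) by (simp add: m_assoc[symmetric]) (simp add: m_assoc)
          thus "y \<in> (\<lambda>x. g \<otimes> x \<otimes> inv g) ` carrier (G\<lparr>carrier := N\<rparr>)"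
            using m by (intro image_eqI[where x="inv g \<otimes> y \<otimes> g"]) simp_all
        qed
      qed
    qed
  qed
qed

lemma char_normal:
  fixes G (structure)
  assumes "finite_group G" "N \<lhd> G" "char_subgroup K (G\<lparr>carrier := N\<rparr>)"
  shows "K \<lhd> G"
proof -
  have gG: "group G" using assms(1) unfolding finite_group_def by (elim conjE)
  interpret group G by fact
  have sN: "subgroup N G" using assms(2) normal_imp_subgroup by blast
  have sK': "subgroup K (G\<lparr>carrier := N\<rparr>)" and
    iK: "\<forall>f \<in> iso (G\<lparr>carrier := N\<rparr>) (G\<lparr>carrier := N\<rparr>). f ` K = K"
    using assms(3) unfolding char_subgroup_def by simp_all
  have sK: "subgroup K G" using sub_of_sub[OF gG sN sK'] .
  show ?thesis unfolding normal_inv_iff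
  proof (intro conjI ballI sK)
    fix x h assume x: "x \<in> carrier G" and h: "h \<in> K"
    have "(\<lambda>y. x \<otimes> y \<otimes> inv x) ` K = K"
      using bspec[OF iK conj_iso[OF gG assms(2) x]] .
    thus "x \<otimes> h \<otimes> inv x \<in> K" using h by blast
  qed
qed

lemma giter_props:
  assumes F: "F_functorial \<gamma>" and G: "finite_group G"
  shows "giter \<gamma> i G \<lhd> G \<and> giter \<gamma> (Suc i) G \<subseteq> giter \<gamma> i G"
proof (induction i)
  case 0
  have "group G" using G finite_group_def by blast
  hence n: "carrier G \<lhd> G" using group.normal_self by blast
  have "\<gamma> G \<subseteq> carrier G" using gamma_sub[OF F G] subgroup.subset by blast
  then show ?case using n by simp
next
  case (Suc i)
  let ?N = "giter \<gamma> i G"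
  have sN: "subgroup ?N G" using Suc normal_imp_subgroup by blast
  have fg: "finite_group (G\<lparr>carrier := ?N\<rparr>)" using fg_sub[OF G sN] .
  have "functorial \<gamma>" using F unfolding F_functorial_def by (elim conjE)
  hence ch: "char_subgroup (giter \<gamma> (Suc i) G) (G\<lparr>carrier := ?N\<rparr>)"
    using fg unfolding functorial_def by simp
  have nS: "giter \<gamma> (Suc i) G \<lhd> G" using char_normal[OF G _ ch] Suc by blast
  have sS: "subgroup (giter \<gamma> (Suc i) G) G" using nS normal_imp_subgroup by blast
  have fg2: "finite_group (G\<lparr>carrier := giter \<gamma> (Suc i) G\<rparr>)" using fg_sub[OF G sS] .
  have "giter \<gamma> (Suc (Suc i)) G \<subseteq> giter \<gamma> (Suc i) G"
    using gamma_sub[OF F fg2] subgroup.subset by fastforce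
  then show ?case using nS by blast
qed

lemma giter_const:
  assumes "giter \<gamma> (Suc n) G = giter \<gamma> n G" "n \<le> m"
  shows "giter \<gamma> m G = giter \<gamma> n G"
  using assms(2)
proof (induction m rule: dec_induct)
  case base then show ?case by simp
next
  case (step m)
  have "giter \<gamma> (Suc m) G = \<gamma> (G\<lparr>carrier := giter \<gamma> m G\<rparr>)" by simp
  also have "\<dots> = giter \<gamma> (Suc n) G" using step by simp
  finally show ?case using assms(1) by simp
qed

lemma giter_anti:
  assumes F: "F_functorial \<gamma>" and G: "finite_group G" and "i \<le> j"
  shows "giter \<gamma> j G \<subseteq> giter \<gamma> i G"
  using assms(3)
proof (induction j rule: dec_induct)
  case base then show ?case by simp
next
  case (step m) then show ?case using giter_props[OF F G, of m] by blast
qed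

lemma giter_stab:
  assumes F: "F_functorial \<gamma>" and G: "finite_group G"
  shows "\<exists>n. giter \<gamma> (Suc n) G = giter \<gamma> n G"
proof (rule ccontr)
  assume a: "\<not> ?thesis"
  have fin: "finite (carrier G)" using G finite_group_def by blast
  have sub: "\<And>i. giter \<gamma> i G \<subseteq> carrier G"
    using giter_props[OF F G] normal_imp_subgroup subgroup.subset by blast
  have "\<And>i. card (giter \<gamma> i G) + i \<le> card (carrier G)"
  proof -
    fix i show "card (giter \<gamma> i G) + i \<le> card (carrier G)"
    proof (induction i)
      case 0 then show ?case by simp
    next
      case (Suc i)
      have "giter \<gamma> (Suc i) G \<subset> giter \<gamma> i G" using a giter_props[OF F G, of i] by blast
      hence "card (giter \<gamma> (Suc i) G) < card (giter \<gamma> i G)"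
        using psubset_card_mono finite_subset[OF sub fin] by blast
      then show ?case using Suc by simp
    qed
  qed
  from this[of "Suc (card (carrier G))"] show False by simp
qed

lemma gamma_inf_eq:
  assumes F: "F_functorial \<gamma>" and G: "finite_group G" and st: "giter \<gamma> (Suc n) G = giter \<gamma> n G"
  shows "gamma_inf \<gamma> G = giter \<gamma> n G"
proof
  show "gamma_inf \<gamma> G \<subseteq> giter \<gamma> n G"
    unfolding gamma_inf_def using st by (metis INT_lower atLeast_iff le_add1 plus_1_eq_Suc)
  show "giter \<gamma> n G \<subseteq> gamma_inf \<gamma> G"
    unfolding gamma_inf_def
  proof (rule INT_greatest)
    fix i assume "i \<in> {1::nat..}"
    show "giter \<gamma> n G \<subseteq> giter \<gamma> i G"
    proof (cases "i \<le> n")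
      case True then show ?thesis using giter_anti[OF F G] by blast
    next
      case False then show ?thesis using giter_const[OF st, of i] by simp
    qed
  qed
qed

lemma FF_giter:
  assumes "\<gamma> G = carrier G" shows "giter \<gamma> i G = carrier G"
  using assms by (induction i) auto

theorem proposition4:
  fixes \<gamma> :: "grp \<Rightarrow> nat set"
  assumes "F_functorial \<gamma>"
  shows "FF \<gamma> = FF (gamma_inf \<gamma>)
    \<and> hom_image_closed (FF \<gamma>)
    \<and> N0_closed (FF \<gamma>)
    \<and> (\<forall>G. finite_group G \<longrightarrow> X_radical (FF \<gamma>) G = gamma_inf \<gamma> G)"
proof (intro conjI allI impI)
  note F = assms
  have F1': "\<forall>G H f. finite_group G \<and> finite_group H \<and> f \<in> hom G H \<and> f ` carrier G = carrier H \<longrightarrow> f ` \<gamma> G \<subseteq> \<gamma> H"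
    using F unfolding F_functorial_def by (elim conjE)
  have F2': "\<forall>G N. finite_group G \<and> N \<lhd> G \<longrightarrow> \<gamma> (G\<lparr>carrier := N\<rparr>) \<subseteq> \<gamma> G"
    using F unfolding F_functorial_def by (elim conjE)
  have F1: "\<And>G H f. finite_group G \<Longrightarrow> finite_group H \<Longrightarrow> f \<in> hom G H \<Longrightarrow> f ` carrier G = carrier H \<Longrightarrow> f ` \<gamma> G \<subseteq> \<gamma> H"
    using F1' by blast
  have F2: "\<And>G N. finite_group G \<Longrightarrow> N \<lhd> G \<Longrightarrow> \<gamma> (G\<lparr>carrier := N\<rparr>) \<subseteq> \<gamma> G"
    using F2' by blast
  show "FF \<gamma> = FF (gamma_inf \<gamma>)"
  proof (rule ext)
    fix G :: grp
    show "FF \<gamma> G = FF (gamma_inf \<gamma>) G"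
    proof
      assume a: "FF \<gamma> G"
      hence "\<And>i. giter \<gamma> i G = carrier G" using FF_giter unfolding FF_def by blast
      thus "FF (gamma_inf \<gamma>) G" using a unfolding FF_def gamma_inf_def by auto
    next
      assume a: "FF (gamma_inf \<gamma>) G"
      hence G: "finite_group G" unfolding FF_def by blast
      have "gamma_inf \<gamma> G \<subseteq> giter \<gamma> 1 G" unfolding gamma_inf_def by auto
      hence "carrier G \<subseteq> \<gamma> G" using a unfolding FF_def by simp
      moreover have "\<gamma> G \<subseteq> carrier G" using gamma_sub[OF F G] subgroup.subset by blast
      ultimately show "FF \<gamma> G" using G unfolding FF_def by blast
    qed
  qed
  show "hom_image_closed (FF \<gamma>)"
    unfolding hom_image_closed_def
  proof (intro allI impI)
    fix G H :: grp and f
    assume a: "FF \<gamma> G \<and> finite_group H \<and> f \<in> hom G H \<and> f ` carrier G = carrier H"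
    hence "carrier H \<subseteq> \<gamma> H" using F1[of G H f] unfolding FF_def by auto
    moreover have "\<gamma> H \<subseteq> carrier H" using gamma_sub[OF F] a subgroup.subset by blast
    ultimately show "FF \<gamma> H" using a unfolding FF_def by blast
  qed
  show "N0_closed (FF \<gamma>)"
    unfolding N0_closed_def
  proof (intro allI impI)
    fix G :: grp and N M
    assume a: "finite_group G \<and> N \<lhd> G \<and> M \<lhd> G \<and> FF \<gamma> (G\<lparr>carrier := N\<rparr>) \<and> FF \<gamma> (G\<lparr>carrier := M\<rparr>) \<and> N <#>\<^bsub>G\<^esub> M = carrier G"
    hence G: "finite_group G" by blast
    have N: "N \<subseteq> \<gamma> G" using F2[of G N] a unfolding FF_def by auto
    have M: "M \<subseteq> \<gamma> G" using F2[of G M] a unfolding FF_def by auto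
    have s: "subgroup (\<gamma> G) G" using gamma_sub[OF F G] .
    have "N <#>\<^bsub>G\<^esub> M \<subseteq> \<gamma> G"
      using N M s unfolding set_mult_def by (auto intro: subgroup.m_closed)
    hence "carrier G \<subseteq> \<gamma> G" using a by simp
    moreover have "\<gamma> G \<subseteq> carrier G" using s subgroup.subset by blast
    ultimately show "FF \<gamma> G" using G unfolding FF_def by blast
  qed
  fix G :: grp
  assume G: "finite_group G"
  have gG: "group G" using G finite_group_def by blast
  obtain n where st: "giter \<gamma> (Suc n) G = giter \<gamma> n G" using giter_stab[OF F G] by blast
  have eq: "gamma_inf \<gamma> G = giter \<gamma> n G" using gamma_inf_eq[OF F G st] .
  let ?K = "giter \<gamma> n G"
  have nK: "?K \<lhd> G" using giter_props[OF F G] by blast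
  have sK: "subgroup ?K G" using nK normal_imp_subgroup by blast
  have FK: "FF \<gamma> (G\<lparr>carrier := ?K\<rparr>)"
    using fg_sub[OF G sK] st unfolding FF_def by simp
  have inc: "\<And>H i. H \<lhd> G \<Longrightarrow> FF \<gamma> (G\<lparr>carrier := H\<rparr>) \<Longrightarrow> H \<subseteq> giter \<gamma> i G"
  proof -
    fix H i assume nH: "H \<lhd> G" and FH: "FF \<gamma> (G\<lparr>carrier := H\<rparr>)"
    show "H \<subseteq> giter \<gamma> i G"
    proof (induction i)
      case 0 then show ?case using nH normal_imp_subgroup subgroup.subset by fastforce
    next
      case (Suc i)
      let ?N = "giter \<gamma> i G"
      have sN: "subgroup ?N G" using giter_props[OF F G] normal_imp_subgroup by blast
      have fg: "finite_group (G\<lparr>carrier := ?N\<rparr>)" using fg_sub[OF G sN] .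
      have gN: "group (G\<lparr>carrier := ?N\<rparr>)" using fg finite_group_def by blast
      have sH: "subgroup H G" using nH normal_imp_subgroup by blast
      have sH': "subgroup H (G\<lparr>carrier := ?N\<rparr>)" using group.subgroup_incl[OF gG sH sN Suc] .
      have "H \<lhd> G\<lparr>carrier := ?N\<rparr>"
        unfolding group.normal_inv_iff[OF gN]
      proof (intro conjI ballI sH')
        fix x h assume "x \<in> carrier (G\<lparr>carrier := ?N\<rparr>)" "h \<in> H"
        moreover have "x \<in> carrier G" using calculation sN subgroup.subset by fastforce
        moreover have "h \<in> ?N" using calculation Suc by blast
        ultimately show "x \<otimes>\<^bsub>G\<lparr>carrier := ?N\<rparr>\<^esub> h \<otimes>\<^bsub>G\<lparr>carrier := ?N\<rparr>\<^esub> inv\<^bsub>G\<lparr>carrier := ?N\<rparr>\<^esub> x \<in> H"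
          using nH group.normal_inv_iff[OF gG] group.m_inv_consistent[OF gG sN] by auto
      qed
      from F2[OF fg this] have "\<gamma> (G\<lparr>carrier := H\<rparr>) \<subseteq> giter \<gamma> (Suc i) G" by simp
      then show ?case using FH unfolding FF_def by simp
    qed
  qed
  show "X_radical (FF \<gamma>) G = gamma_inf \<gamma> G"
    unfolding X_radical_def eq
  proof
    show "generate G (\<Union> {H. H \<lhd> G \<and> FF \<gamma> (G\<lparr>carrier := H\<rparr>)}) \<subseteq> ?K"
    proof (rule group.generate_subgroup_incl[OF gG _ sK])
      show "\<Union> {H. H \<lhd> G \<and> FF \<gamma> (G\<lparr>carrier := H\<rparr>)} \<subseteq> ?K"
      proof (rule Union_least)
        fix Y0 assume "Y0 \<in> {H. H \<lhd> G \<and> FF \<gamma> (G\<lparr>carrier := H\<rparr>)}"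
        hence "Y0 \<lhd> G" "FF \<gamma> (G\<lparr>carrier := Y0\<rparr>)" by simp_all
        thus "Y0 \<subseteq> ?K" by (rule inc)
      qed
    qed
    show "?K \<subseteq> generate G (\<Union> {H. H \<lhd> G \<and> FF \<gamma> (G\<lparr>carrier := H\<rparr>)})"
      using nK FK by (blast intro: generate.incl)
  qed
qed

end
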